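(* Let $n\ge 3$, $m\ge 2$, and $F,R$ be as in the context. The group $(R\cap[F,F])/[R,F]$ is generated by the images of the elements $[s_i,s_j]$ ($1\le i<j-1\le n-2$), $[s_i,s_{i+1},s_i]$ and $[s_i,s_{i+1},s_is_{i+1}^{-1}]$ ($1\le i\le n-2$), and $[[s_i,s_{i+1}],[s_{i+1},s_{i+2}]]$ ($1\le i\le n-3$).
   Context: Commutator conventions: $[a,b]=a^{-1}b^{-1}ab$, $a^b=b^{-1}ab$, and commutators are left-normed: $[a_1,\dots,a_k]=[[a_1,\dots,a_{k-1}],a_k]$. Let $F$ be the free group on $s_1,\dots,s_{n-1}$ and let $R$ be the normal closure in $F$ of the following relators: $s_i^m$ ($1\le i\le n-1$); $[s_i,s_j]$ ($1\le i<j-1\le n-2$); $[s_i,s_{i+1},s_i]$ and $[s_i,s_{i+1},s_{i+1}]$ ($1\le i\le n-2$); $[[s_i,s_{i+1}],[s_{i+1},s_{i+2}]]$ ($1\le i\le n-3$). It is known that $F/R\cong \mathrm{UT}_n(\mathbb Z/m\mathbb Z)$ via $s_i\mapsto I+E_{i,i+1}$. *)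

theory Defs
  imports "HOL-Algebra.Algebra"
begin

(* Free group on a set of generators S, realised as reduced words.
   A letter (i, False) stands for s_i, (i, True) for s_i^{-1}. *)
type_synonym word = "(nat \<times> bool) list"

fun reduced :: "word \<Rightarrow> bool" where
  "reduced [] = True"
| "reduced [a] = True"
| "reduced (a # b # w) = (\<not> (fst a = fst b \<and> snd a \<noteq> snd b) \<and> reduced (b # w))"

fun push :: "nat \<times> bool \<Rightarrow> word \<Rightarrow> word" where
  "push a [] = [a]"
| "push a (b # w) = (if fst a = fst b \<and> snd a \<noteq> snd b then w else a # b # w)"

definition free_group :: "nat set \<Rightarrow> word monoid" where
  "free_group S = \<lparr> carrier = {w. reduced w \<and> fst ` set w \<subseteq> S},
                    monoid.mult = (\<lambda>u v. foldr push u v),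
                    one = [] \<rparr>"

definition gen :: "nat \<Rightarrow> word" where
  "gen i = [(i, False)]"

definition comm :: "('a, 'b) monoid_scheme \<Rightarrow> 'a \<Rightarrow> 'a \<Rightarrow> 'a" where
  "comm G a b = inv\<^bsub>G\<^esub> a \<otimes>\<^bsub>G\<^esub> inv\<^bsub>G\<^esub> b \<otimes>\<^bsub>G\<^esub> a \<otimes>\<^bsub>G\<^esub> b"

definition normal_closure :: "('a, 'b) monoid_scheme \<Rightarrow> 'a set \<Rightarrow> 'a set" where
  "normal_closure G S = generate G (\<Union>g\<in>carrier G. (\<lambda>y. inv\<^bsub>G\<^esub> g \<otimes>\<^bsub>G\<^esub> y \<otimes>\<^bsub>G\<^esub> g) ` S)"

definition comm_subgroup :: "('a, 'b) monoid_scheme \<Rightarrow> 'a set \<Rightarrow> 'a set \<Rightarrow> 'a set" where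
  "comm_subgroup G A B = generate G {comm G a b | a b. a \<in> A \<and> b \<in> B}"

definition UT_relators :: "nat \<Rightarrow> nat \<Rightarrow> word set" where
  "UT_relators n m =
     {gen i [^]\<^bsub>free_group {1..n-1}\<^esub> m | i. 1 \<le> i \<and> i \<le> n - 1}
   \<union> {comm (free_group {1..n-1}) (gen i) (gen j) | i j. 1 \<le> i \<and> i < j - 1 \<and> j - 1 \<le> n - 2}
   \<union> {comm (free_group {1..n-1}) (comm (free_group {1..n-1}) (gen i) (gen (i+1))) (gen i)
        | i. 1 \<le> i \<and> i \<le> n - 2}
   \<union> {comm (free_group {1..n-1}) (comm (free_group {1..n-1}) (gen i) (gen (i+1))) (gen (i+1))
        | i. 1 \<le> i \<and> i \<le> n - 2}
   \<union> {comm (free_group {1..n-1}) (comm (free_group {1..n-1}) (gen i) (gen (i+1)))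
                                  (comm (free_group {1..n-1}) (gen (i+1)) (gen (i+2)))
        | i. 1 \<le> i \<and> i \<le> n - 3}"

definition UT_gens :: "nat \<Rightarrow> word set" where
  "UT_gens n =
     {comm (free_group {1..n-1}) (gen i) (gen j) | i j. 1 \<le> i \<and> i < j - 1 \<and> j - 1 \<le> n - 2}
   \<union> {comm (free_group {1..n-1}) (comm (free_group {1..n-1}) (gen i) (gen (i+1))) (gen i)
        | i. 1 \<le> i \<and> i \<le> n - 2}
   \<union> {comm (free_group {1..n-1}) (comm (free_group {1..n-1}) (gen i) (gen (i+1)))
          (gen i \<otimes>\<^bsub>free_group {1..n-1}\<^esub> inv\<^bsub>free_group {1..n-1}\<^esub> gen (i+1))
        | i. 1 \<le> i \<and> i \<le> n - 2}
   \<union> {comm (free_group {1..n-1}) (comm (free_group {1..n-1}) (gen i) (gen (i+1)))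
                                  (comm (free_group {1..n-1}) (gen (i+1)) (gen (i+2)))
        | i. 1 \<le> i \<and> i \<le> n - 3}"

end

theory Submission
  imports Defs
begin

definition flip :: "nat \<times> bool \<Rightarrow> nat \<times> bool" where
  "flip a = (fst a, \<not> snd a)"

lemma push_cases: "push a w = (case w of [] \<Rightarrow> [a] | b # w' \<Rightarrow> (if b = flip a then w' else a # w))"
  by (cases w) (auto simp: flip_def prod_eq_iff)

lemma reduced_tl: "reduced (a # w) \<Longrightarrow> reduced w"
  by (cases w) auto

lemma reduced_push: "reduced w \<Longrightarrow> reduced (push a w)"
  by (cases w) (auto dest: reduced_tl)

lemma push_flip: "reduced w \<Longrightarrow> push (flip a) (push a w) = w"
proof (cases w)
  case Nil then show ?thesis by (simp add: flip_def)
next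
  case (Cons b w')
  assume r: "reduced w"
  show ?thesis
  proof (cases "fst a = fst b \<and> snd a \<noteq> snd b")
    case True
    then have w: "w = flip a # w'" using Cons by (cases a; cases b) (auto simp: flip_def)
    show ?thesis
    proof (cases w')
      case Nil then show ?thesis using True Cons by (simp add: flip_def)
    next
      case (Cons c w'')
      then show ?thesis using True r w by (auto simp: flip_def)
    qed
  next
    case False then show ?thesis using Cons by (auto simp: flip_def)
  qed
qed

lemma flip_flip[simp]: "flip (flip a) = a" by (simp add: flip_def)

lemma push_letters: "fst ` set (push a w) \<subseteq> insert (fst a) (fst ` set w)"
  by (cases w) auto

lemma foldr_reduced: "reduced v \<Longrightarrow> reduced (foldr push u v)"
  by (induction u) (auto intro: reduced_push)

lemma foldr_letters: "fst ` set (foldr push u v) \<subseteq> fst ` set u \<union> fst ` set v"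
proof (induction u)
  case Nil then show ?case by simp
next
  case (Cons a u)
  have "fst ` set (foldr push (a # u) v) \<subseteq> insert (fst a) (fst ` set (foldr push u v))"
    using push_letters by simp
  then show ?case using Cons.IH by auto
qed

lemma foldr_nil: "reduced u \<Longrightarrow> foldr push u [] = u"
proof (induction u)
  case Nil then show ?case by simp
next
  case (Cons a u)
  then have r: "reduced u" using reduced_tl by blast
  then have "foldr push (a # u) [] = push a u" using Cons by simp
  also have "\<dots> = a # u" using Cons.prems by (cases u) auto
  finally show ?case .
qed

lemma foldr_push: "reduced w \<Longrightarrow> reduced v \<Longrightarrow> foldr push (push a w) v = push a (foldr push w v)"
proof (cases w)
  case Nil then show ?thesis by simp
next
  case (Cons b w')
  assume r: "reduced w" "reduced v"
  show ?thesis
  proof (cases "b = flip a")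
    case True
    have "push a (foldr push w v) = push (flip b) (push b (foldr push w' v))"
      using Cons True by simp
    also have "\<dots> = foldr push w' v" by (rule push_flip, rule foldr_reduced, fact)
    finally show ?thesis using Cons True by (simp add: push_cases)
  next
    case False then show ?thesis using Cons by (simp add: push_cases)
  qed
qed

lemma foldr_assoc: "reduced v \<Longrightarrow> reduced w \<Longrightarrow>
   foldr push (foldr push u v) w = foldr push u (foldr push v w)"
  by (induction u) (auto simp: foldr_push foldr_reduced)

definition winv :: "word \<Rightarrow> word" where "winv u = rev (map flip u)"

lemma winv_cancel: "reduced v \<Longrightarrow> foldr push (winv u) (foldr push u v) = v"
proof (induction u arbitrary: v)
  case Nil then show ?case by (simp add: winv_def)
next
  case (Cons a u)
  have "foldr push (winv (a # u)) (foldr push (a # u) v)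
      = foldr push (winv u) (push (flip a) (push a (foldr push u v)))"
    by (simp add: winv_def)
  also have "\<dots> = foldr push (winv u) (foldr push u v)"
    using Cons.prems by (simp add: push_flip foldr_reduced)
  also have "\<dots> = v" using Cons by simp
  finally show ?case .
qed

lemma winv_letters: "fst ` set (winv u) = fst ` set u"
  by (force simp: winv_def flip_def)

lemma free_group_carrier: "carrier (free_group S) = {w. reduced w \<and> fst ` set w \<subseteq> S}"
  by (simp add: free_group_def)
lemma free_group_mult[simp]: "u \<otimes>\<^bsub>free_group S\<^esub> v = foldr push u v"
  by (simp add: free_group_def)
lemma free_group_one[simp]: "\<one>\<^bsub>free_group S\<^esub> = []"
  by (simp add: free_group_def)

lemma group_free_group: "group (free_group S)"
proof (rule groupI)
  fix x y assume "x \<in> carrier (free_group S)" "y \<in> carrier (free_group S)"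
  then show "x \<otimes>\<^bsub>free_group S\<^esub> y \<in> carrier (free_group S)"
  proof -
    have "fst ` set x \<subseteq> S" "fst ` set y \<subseteq> S"
      using \<open>x \<in> carrier (free_group S)\<close> \<open>y \<in> carrier (free_group S)\<close>
      by (simp_all add: free_group_carrier)
    then have "fst ` set (foldr push x y) \<subseteq> S"
      using foldr_letters[of x y] by (meson Un_least order_trans)
    then show ?thesis using foldr_reduced[of y x] \<open>y \<in> carrier (free_group S)\<close>
      by (simp add: free_group_carrier)
  qed
next
  show "\<one>\<^bsub>free_group S\<^esub> \<in> carrier (free_group S)" by (simp add: free_group_carrier)
next
  fix x y z assume "x \<in> carrier (free_group S)" "y \<in> carrier (free_group S)" "z \<in> carrier (free_group S)"
  then show "x \<otimes>\<^bsub>free_group S\<^esub> y \<otimes>\<^bsub>free_group S\<^esub> z = x \<otimes>\<^bsub>free_group S\<^esub> (y \<otimes>\<^bsub>free_group S\<^esub> z)"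
    by (simp add: free_group_carrier foldr_assoc)
next
  fix x assume "x \<in> carrier (free_group S)"
  then show "\<one>\<^bsub>free_group S\<^esub> \<otimes>\<^bsub>free_group S\<^esub> x = x" by simp
next
  fix x assume x: "x \<in> carrier (free_group S)"
  define y where "y = foldr push (winv x) []"
  have "y \<in> carrier (free_group S)"
    using foldr_reduced[of "[]" "winv x"] foldr_letters[of "winv x" "[]"] x winv_letters[of x]
    by (auto simp: free_group_carrier y_def)
  moreover have "y \<otimes>\<^bsub>free_group S\<^esub> x = \<one>\<^bsub>free_group S\<^esub>"
  proof -
    have "y \<otimes>\<^bsub>free_group S\<^esub> x = foldr push (winv x) (foldr push [] x)"
      using x by (simp add: y_def foldr_assoc free_group_carrier)
    also have "\<dots> = foldr push (winv x) (foldr push x [])"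
      using x by (simp add: foldr_nil free_group_carrier)
    also have "\<dots> = []" by (simp add: winv_cancel)
    finally show ?thesis by simp
  qed
  ultimately show "\<exists>y\<in>carrier (free_group S). y \<otimes>\<^bsub>free_group S\<^esub> x = \<one>\<^bsub>free_group S\<^esub>" by blast
qed



context group begin

lemma cancel1[simp]: "x \<in> carrier G \<Longrightarrow> y \<in> carrier G \<Longrightarrow> x \<otimes> (inv x \<otimes> y) = y"
  by (simp add: m_assoc[symmetric])
lemma cancel2[simp]: "x \<in> carrier G \<Longrightarrow> y \<in> carrier G \<Longrightarrow> inv x \<otimes> (x \<otimes> y) = y"
  by (simp add: m_assoc[symmetric])

lemma comm_closed[simp]: "a \<in> carrier G \<Longrightarrow> b \<in> carrier G \<Longrightarrow> comm G a b \<in> carrier G"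
  by (simp add: comm_def)

lemma comm_conj: "a \<in> carrier G \<Longrightarrow> g \<in> carrier G \<Longrightarrow> inv g \<otimes> a \<otimes> g = a \<otimes> comm G a g"
  by (simp add: comm_def m_assoc)

lemma comm_alt: "a \<in> carrier G \<Longrightarrow> b \<in> carrier G \<Longrightarrow> comm G a b = inv a \<otimes> (inv b \<otimes> a \<otimes> b)"
  by (simp add: comm_def m_assoc)

lemma comm_swap: "a \<in> carrier G \<Longrightarrow> b \<in> carrier G \<Longrightarrow> comm G b a = inv (comm G a b)"
  by (simp add: comm_def m_assoc inv_mult_group)

lemma comm_prod_inv: "c \<in> carrier G \<Longrightarrow> a \<in> carrier G \<Longrightarrow> b \<in> carrier G \<Longrightarrow>
  comm G c (a \<otimes> inv b) = (inv (inv b) \<otimes> inv (comm G c b) \<otimes> inv b) \<otimes> (inv (inv b) \<otimes> comm G c a \<otimes> inv b)"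
  by (simp add: comm_def m_assoc inv_mult_group)

lemma conj_set_carrier: "S \<subseteq> carrier G \<Longrightarrow> (\<Union>g\<in>carrier G. (\<lambda>y. inv g \<otimes> y \<otimes> g) ` S) \<subseteq> carrier G"
  by auto

lemma normal_closure_subgroup: "S \<subseteq> carrier G \<Longrightarrow> subgroup (normal_closure G S) G"
  unfolding normal_closure_def by (rule generate_is_subgroup) auto

lemma normal_closure_incl: "S \<subseteq> carrier G \<Longrightarrow> S \<subseteq> normal_closure G S"
proof
  fix x assume "S \<subseteq> carrier G" "x \<in> S"
  then have "x = inv \<one> \<otimes> x \<otimes> \<one>" by auto
  then show "x \<in> normal_closure G S" unfolding normal_closure_def
    apply (intro generate.incl UN_I[of "\<one>"])
     apply simp
    apply (rule image_eqI[where x=x])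
    using \<open>x \<in> S\<close> by simp_all
qed

lemma normal_closure_conj:
  assumes S: "S \<subseteq> carrier G" and x: "x \<in> normal_closure G S" and g: "g \<in> carrier G"
  shows "inv g \<otimes> x \<otimes> g \<in> normal_closure G S"
  using x unfolding normal_closure_def
proof (induction rule: generate.induct)
  case one then show ?case using g by (simp add: generate.one)
next
  case (incl h)
  then obtain g' y where gy: "g' \<in> carrier G" "y \<in> S" "h = inv g' \<otimes> y \<otimes> g'" by blast
  have eq: "inv g \<otimes> h \<otimes> g = inv (g' \<otimes> g) \<otimes> y \<otimes> (g' \<otimes> g)"
    using gy g S[THEN subsetD, OF gy(2)] by (simp add: m_assoc inv_mult_group)
  have mem: "inv (g' \<otimes> g) \<otimes> y \<otimes> (g' \<otimes> g) \<in> (\<Union>g\<in>carrier G. (\<lambda>y. inv g \<otimes> y \<otimes> g) ` S)"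
    apply (rule UN_I[of "g' \<otimes> g"])
    using gy g apply simp
    apply (rule image_eqI[where x=y])
     apply (rule refl)
    using gy by simp
  show ?case by (subst eq) (rule generate.incl[OF mem])
next
  case (inv h)
  then obtain g' y where gy: "g' \<in> carrier G" "y \<in> S" "h = inv g' \<otimes> y \<otimes> g'" by blast
  have eq: "inv g \<otimes> inv h \<otimes> g = inv (inv (g' \<otimes> g) \<otimes> y \<otimes> (g' \<otimes> g))"
    using gy g S[THEN subsetD, OF gy(2)] by (simp add: m_assoc inv_mult_group)
  have mem: "inv (g' \<otimes> g) \<otimes> y \<otimes> (g' \<otimes> g) \<in> (\<Union>g\<in>carrier G. (\<lambda>y. inv g \<otimes> y \<otimes> g) ` S)"
    apply (rule UN_I[of "g' \<otimes> g"])
    using gy g apply simp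
    apply (rule image_eqI[where x=y])
     apply (rule refl)
    using gy by simp
  show ?case by (subst eq) (rule generate.inv[OF mem])
next
  case (eng h1 h2)
  have c: "h1 \<in> carrier G" "h2 \<in> carrier G"
    using eng.hyps generate_in_carrier[OF conj_set_carrier[OF S]] by auto
  have eq: "inv g \<otimes> (h1 \<otimes> h2) \<otimes> g = (inv g \<otimes> h1 \<otimes> g) \<otimes> (inv g \<otimes> h2 \<otimes> g)"
    using c g by (simp add: m_assoc)
  show ?case by (subst eq) (rule generate.eng[OF eng.IH])
qed

end



definition ex :: "nat \<Rightarrow> word \<Rightarrow> int" where
  "ex j w = sum_list (map (\<lambda>a. if fst a = j then (if snd a then -1 else 1) else 0) w)"

lemma ex_Cons: "ex j (a # w) = ex j [a] + ex j w"
  by (simp add: ex_def)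

lemma ex_Nil[simp]: "ex j [] = 0"
  by (simp add: ex_def)

lemma ex_push: "ex j (push a w) = ex j [a] + ex j w"
proof (cases w)
  case Nil then show ?thesis by (simp add: ex_def)
next
  case (Cons b w')
  show ?thesis
  proof (cases "fst a = fst b \<and> snd a \<noteq> snd b")
    case True
    then have "ex j [a] + ex j [b] = 0" by (auto simp: ex_def)
    then show ?thesis using Cons True ex_Cons[of j b w'] by simp
  next
    case False
    then have "push a w = a # w" using Cons by auto
    then show ?thesis using ex_Cons[of j a w] by simp
  qed
qed

lemma ex_foldr: "ex j (foldr push u v) = ex j u + ex j v"
proof (induction u)
  case Nil then show ?case by simp
next
  case (Cons a u)
  then show ?case using ex_push[of j a "foldr push u v"] ex_Cons[of j a u] by simp
qed

lemma ex_hom: "ex j \<in> hom (free_group S) integer_group"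
  by (rule homI) (simp_all add: ex_foldr)

lemma ex_gen: "ex j (gen i) = (if i = j then 1 else 0)"
  by (simp add: ex_def gen_def)

lemma gen_carrier: "i \<in> S \<Longrightarrow> gen i \<in> carrier (free_group S)"
  by (simp add: gen_def free_group_carrier)

lemma ex_inv: "x \<in> carrier (free_group S) \<Longrightarrow> ex j (inv\<^bsub>free_group S\<^esub> x) = - ex j x"
  using group_hom.hom_inv[of "free_group S" integer_group "ex j" x] ex_hom[of j S] group_free_group[of S]
  by (simp add: group_hom_def group_hom_axioms_def)

lemma ex_mult: "ex j (x \<otimes>\<^bsub>free_group S\<^esub> y) = ex j x + ex j y"
  by (simp add: ex_foldr)

lemma ex_comm: "x \<in> carrier (free_group S) \<Longrightarrow> y \<in> carrier (free_group S) \<Longrightarrow> ex j (comm (free_group S) x y) = 0"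
  unfolding comm_def ex_mult using ex_inv by simp

lemma ex_int_pow: "x \<in> carrier (free_group S) \<Longrightarrow> ex j (x [^]\<^bsub>free_group S\<^esub> (k::int)) = k * ex j x"
  using hom_int_pow[OF ex_hom[of j S] _ group_free_group group_integer_group] by simp

lemma ex_nat_pow: "x \<in> carrier (free_group S) \<Longrightarrow> ex j (x [^]\<^bsub>free_group S\<^esub> (k::nat)) = int k * ex j x"
  using hom_nat_pow[OF ex_hom[of j S] _ group_free_group group_integer_group] by simp

lemma ex_comm_subgroup: "x \<in> comm_subgroup (free_group S) (carrier (free_group S)) (carrier (free_group S)) \<Longrightarrow> ex j x = 0"
proof -
  interpret G: group "free_group S" by (rule group_free_group)
  interpret E: group_hom "free_group S" integer_group "ex j"
    by (simp add: group_hom_def group_hom_axioms_def ex_hom group_free_group)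
  have "comm_subgroup (free_group S) (carrier (free_group S)) (carrier (free_group S)) \<subseteq> kernel (free_group S) integer_group (ex j)"
    unfolding comm_subgroup_def
    by (rule G.generate_subgroup_incl[OF _ E.subgroup_kernel]) (auto simp: kernel_def ex_comm)
  then show "x \<in> comm_subgroup (free_group S) (carrier (free_group S)) (carrier (free_group S)) \<Longrightarrow> ex j x = 0"
    by (auto simp: kernel_def)
qed


declare free_group_mult[simp del] free_group_one[simp del] mult_FactGroup[simp del] one_FactGroup[simp del]
declare One_nat_def[simp del]

locale ut =
  fixes n m :: nat
  assumes n3: "3 \<le> n" and m2: "2 \<le> m"
begin

abbreviation FG where "FG \<equiv> free_group {1..n-1}"
abbreviation RR where "RR \<equiv> normal_closure FG (UT_relators n m)"
abbreviation NN where "NN \<equiv> comm_subgroup FG RR (carrier FG)"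
abbreviation CC where "CC \<equiv> comm_subgroup FG (carrier FG) (carrier FG)"
abbreviation HH where "HH \<equiv> generate FG (UT_gens n \<union> NN)"

sublocale G: group FG by (rule group_free_group)

lemma gen_c: "1 \<le> i \<Longrightarrow> i \<le> n - 1 \<Longrightarrow> gen i \<in> carrier FG"
  by (rule gen_carrier) simp

lemma relators_carrier: "UT_relators n m \<subseteq> carrier FG"
proof
  fix x assume "x \<in> UT_relators n m"
  then consider
      i where "x = gen i [^]\<^bsub>FG\<^esub> m" "1 \<le> i" "i \<le> n - 1"
    | i j where "x = comm FG (gen i) (gen j)" "1 \<le> i" "i < j - 1" "j - 1 \<le> n - 2"
    | i where "x = comm FG (comm FG (gen i) (gen (i+1))) (gen i)" "1 \<le> i" "i \<le> n - 2"
    | i where "x = comm FG (comm FG (gen i) (gen (i+1))) (gen (i+1))" "1 \<le> i" "i \<le> n - 2"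
    | i where "x = comm FG (comm FG (gen i) (gen (i+1))) (comm FG (gen (i+1)) (gen (i+2)))" "1 \<le> i" "i \<le> n - 3"
    unfolding UT_relators_def by blast
  then show "x \<in> carrier FG"
    by cases (simp only:; intro G.comm_closed G.nat_pow_closed gen_c; use n3 in linarith)+
qed

lemma R_sub: "subgroup RR FG"
  by (rule G.normal_closure_subgroup[OF relators_carrier])

lemma R_carrier: "RR \<subseteq> carrier FG"
  using R_sub subgroup.subset by blast

lemma R_conj: "x \<in> RR \<Longrightarrow> g \<in> carrier FG \<Longrightarrow> inv\<^bsub>FG\<^esub> g \<otimes>\<^bsub>FG\<^esub> x \<otimes>\<^bsub>FG\<^esub> g \<in> RR"
  by (rule G.normal_closure_conj[OF relators_carrier])

lemma rel_R: "UT_relators n m \<subseteq> RR"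
  by (rule G.normal_closure_incl[OF relators_carrier])

lemma comm_R: assumes "a \<in> RR" "g \<in> carrier FG" shows "comm FG a g \<in> RR"
proof -
  have a: "a \<in> carrier FG" using assms R_carrier by blast
  have "comm FG a g = inv\<^bsub>FG\<^esub> a \<otimes>\<^bsub>FG\<^esub> (inv\<^bsub>FG\<^esub> g \<otimes>\<^bsub>FG\<^esub> a \<otimes>\<^bsub>FG\<^esub> g)"
    using a assms(2) by (rule G.comm_alt)
  also have "\<dots> \<in> RR"
    using R_conj[OF assms] subgroup.m_closed[OF R_sub] subgroup.m_inv_closed[OF R_sub] assms by blast
  finally show ?thesis .
qed

lemma N_R: "NN \<subseteq> RR"
  unfolding comm_subgroup_def
  by (rule G.generate_subgroup_incl[OF _ R_sub]) (blast intro: comm_R)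

lemma N_C: "NN \<subseteq> CC"
  unfolding comm_subgroup_def
  by (rule G.mono_generate) (use R_carrier in blast)

lemma comm_C: "a \<in> carrier FG \<Longrightarrow> b \<in> carrier FG \<Longrightarrow> comm FG a b \<in> CC"
  unfolding comm_subgroup_def by (rule generate.incl) blast

lemma C_sub: "subgroup CC FG"
  unfolding comm_subgroup_def by (rule G.generate_is_subgroup) (blast intro: G.comm_closed)

lemma gens_C: "UT_gens n \<subseteq> CC"
proof
  fix x assume "x \<in> UT_gens n"
  then consider
      i j where "x = comm FG (gen i) (gen j)" "1 \<le> i" "i < j - 1" "j - 1 \<le> n - 2"
    | i where "x = comm FG (comm FG (gen i) (gen (i+1))) (gen i)" "1 \<le> i" "i \<le> n - 2"
    | i where "x = comm FG (comm FG (gen i) (gen (i+1))) (gen i \<otimes>\<^bsub>FG\<^esub> inv\<^bsub>FG\<^esub> gen (i+1))" "1 \<le> i" "i \<le> n - 2"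
    | i where "x = comm FG (comm FG (gen i) (gen (i+1))) (comm FG (gen (i+1)) (gen (i+2)))" "1 \<le> i" "i \<le> n - 3"
    unfolding UT_gens_def by blast
  then show "x \<in> CC"
    by cases (simp only:; intro comm_C G.comm_closed G.m_closed G.inv_closed gen_c; use n3 in linarith)+
qed

lemma third_R:
  assumes i: "1 \<le> i" "i \<le> n - 2"
  shows "comm FG (comm FG (gen i) (gen (i+1))) (gen i \<otimes>\<^bsub>FG\<^esub> inv\<^bsub>FG\<^esub> gen (i+1)) \<in> RR"
proof -
  define c where "c = comm FG (gen i) (gen (i+1))"
  define a where "a = gen i"
  define b where "b = gen (i+1)"
  have ab: "a \<in> carrier FG" "b \<in> carrier FG" "c \<in> carrier FG"
    unfolding a_def b_def c_def by (intro G.comm_closed gen_c; use i n3 in linarith)+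
  have r1: "comm FG c a \<in> RR" using rel_R i unfolding UT_relators_def a_def c_def by blast
  have r2: "comm FG c b \<in> RR" using rel_R i unfolding UT_relators_def b_def c_def by blast
  have e: "comm FG c (a \<otimes>\<^bsub>FG\<^esub> inv\<^bsub>FG\<^esub> b) = (inv\<^bsub>FG\<^esub> (inv\<^bsub>FG\<^esub> b) \<otimes>\<^bsub>FG\<^esub> inv\<^bsub>FG\<^esub> (comm FG c b) \<otimes>\<^bsub>FG\<^esub> inv\<^bsub>FG\<^esub> b) \<otimes>\<^bsub>FG\<^esub> (inv\<^bsub>FG\<^esub> (inv\<^bsub>FG\<^esub> b) \<otimes>\<^bsub>FG\<^esub> comm FG c a \<otimes>\<^bsub>FG\<^esub> inv\<^bsub>FG\<^esub> b)"
    by (rule G.comm_prod_inv[OF ab(3) ab(1) ab(2)])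
  have "inv\<^bsub>FG\<^esub> (comm FG c b) \<in> RR" using r2 subgroup.m_inv_closed[OF R_sub] by blast
  then have x1: "inv\<^bsub>FG\<^esub> (inv\<^bsub>FG\<^esub> b) \<otimes>\<^bsub>FG\<^esub> inv\<^bsub>FG\<^esub> (comm FG c b) \<otimes>\<^bsub>FG\<^esub> inv\<^bsub>FG\<^esub> b \<in> RR"
    by (rule R_conj[OF _ G.inv_closed[OF ab(2)]])
  have x2: "inv\<^bsub>FG\<^esub> (inv\<^bsub>FG\<^esub> b) \<otimes>\<^bsub>FG\<^esub> comm FG c a \<otimes>\<^bsub>FG\<^esub> inv\<^bsub>FG\<^esub> b \<in> RR"
    by (rule R_conj[OF r1 G.inv_closed[OF ab(2)]])
  have "comm FG c (a \<otimes>\<^bsub>FG\<^esub> inv\<^bsub>FG\<^esub> b) \<in> RR" unfolding e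
    by (rule subgroup.m_closed[OF R_sub x1 x2])
  then show ?thesis by (simp only: c_def a_def b_def)
qed

lemma gens_R: "UT_gens n \<subseteq> RR"
proof
  fix x assume "x \<in> UT_gens n"
  then consider "x \<in> UT_relators n m"
    | i where "1 \<le> i" "i \<le> n - 2" "x = comm FG (comm FG (gen i) (gen (i+1))) (gen i \<otimes>\<^bsub>FG\<^esub> inv\<^bsub>FG\<^esub> gen (i+1))"
    unfolding UT_gens_def UT_relators_def by blast
  then show "x \<in> RR"
  proof cases
    case 1 then show ?thesis using rel_R by blast
  next
    case 2 then show ?thesis using third_R by blast
  qed
qed


lemma C_carrier: "CC \<subseteq> carrier FG"
  using C_sub subgroup.subset by blast

lemma H_sub: "subgroup HH FG"
  by (rule G.generate_is_subgroup) (use gens_C C_carrier N_R R_carrier in blast)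

lemma H_carrier: "HH \<subseteq> carrier FG"
  using H_sub subgroup.subset by blast

lemma H_RC: "HH \<subseteq> RR \<inter> CC"
  by (rule G.generate_subgroup_incl[OF _ G.subgroups_Inter_pair[OF R_sub C_sub]])
     (use gens_R gens_C N_R N_C in blast)

lemma N_H: "NN \<subseteq> HH"
  by (blast intro: generate.incl)

lemma gens_H: "UT_gens n \<subseteq> HH"
  by (blast intro: generate.incl)

lemma comm_N: "a \<in> RR \<Longrightarrow> g \<in> carrier FG \<Longrightarrow> comm FG a g \<in> NN"
  unfolding comm_subgroup_def by (rule generate.incl) blast

lemma H_conj: assumes h: "h \<in> HH" and g: "g \<in> carrier FG"
  shows "inv\<^bsub>FG\<^esub> g \<otimes>\<^bsub>FG\<^esub> h \<otimes>\<^bsub>FG\<^esub> g \<in> HH"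
proof -
  have hc: "h \<in> carrier FG" using h H_carrier by blast
  have hR: "h \<in> RR" using h H_RC by blast
  have "inv\<^bsub>FG\<^esub> g \<otimes>\<^bsub>FG\<^esub> h \<otimes>\<^bsub>FG\<^esub> g = h \<otimes>\<^bsub>FG\<^esub> comm FG h g"
    by (rule G.comm_conj[OF hc g])
  also have "\<dots> \<in> HH"
    using subgroup.m_closed[OF H_sub h] N_H comm_N[OF hR g] by blast
  finally show ?thesis .
qed

lemma H_normal: "HH \<lhd> FG"
proof -
  have "\<forall>x\<in>carrier FG. \<forall>h\<in>HH. x \<otimes>\<^bsub>FG\<^esub> h \<otimes>\<^bsub>FG\<^esub> inv\<^bsub>FG\<^esub> x \<in> HH"
  proof (intro ballI)
    fix x h assume x: "x \<in> carrier FG" and h: "h \<in> HH"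
    have "inv\<^bsub>FG\<^esub> (inv\<^bsub>FG\<^esub> x) \<otimes>\<^bsub>FG\<^esub> h \<otimes>\<^bsub>FG\<^esub> inv\<^bsub>FG\<^esub> x \<in> HH"
      by (rule H_conj[OF h G.inv_closed[OF x]])
    then show "x \<otimes>\<^bsub>FG\<^esub> h \<otimes>\<^bsub>FG\<^esub> inv\<^bsub>FG\<^esub> x \<in> HH" using x by simp
  qed
  then show ?thesis using G.normal_inv_iff H_sub by blast
qed

lemma rel4_H:
  assumes i: "1 \<le> i" "i \<le> n - 2"
  shows "comm FG (comm FG (gen i) (gen (i+1))) (gen (i+1)) \<in> HH"
proof -
  define c where "c = comm FG (gen i) (gen (i+1))"
  define a where "a = gen i"
  define b where "b = gen (i+1)"
  have ab: "a \<in> carrier FG" "b \<in> carrier FG" "c \<in> carrier FG"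
    unfolding a_def b_def c_def by (intro G.comm_closed gen_c; use i n3 in linarith)+
  define X1 where "X1 = inv\<^bsub>FG\<^esub> (inv\<^bsub>FG\<^esub> b) \<otimes>\<^bsub>FG\<^esub> inv\<^bsub>FG\<^esub> (comm FG c b) \<otimes>\<^bsub>FG\<^esub> inv\<^bsub>FG\<^esub> b"
  define X2 where "X2 = inv\<^bsub>FG\<^esub> (inv\<^bsub>FG\<^esub> b) \<otimes>\<^bsub>FG\<^esub> comm FG c a \<otimes>\<^bsub>FG\<^esub> inv\<^bsub>FG\<^esub> b"
  have X: "X1 \<in> carrier FG" "X2 \<in> carrier FG" using ab unfolding X1_def X2_def by simp_all
  have e: "comm FG c (a \<otimes>\<^bsub>FG\<^esub> inv\<^bsub>FG\<^esub> b) = X1 \<otimes>\<^bsub>FG\<^esub> X2"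
    unfolding X1_def X2_def by (rule G.comm_prod_inv[OF ab(3) ab(1) ab(2)])
  have T: "comm FG c (a \<otimes>\<^bsub>FG\<^esub> inv\<^bsub>FG\<^esub> b) \<in> HH"
  proof -
    have "comm FG (comm FG (gen i) (gen (i+1))) (gen i \<otimes>\<^bsub>FG\<^esub> inv\<^bsub>FG\<^esub> gen (i+1)) \<in> UT_gens n"
      unfolding UT_gens_def using i by blast
    then show ?thesis using gens_H by (simp only: c_def a_def b_def) blast
  qed
  have ca: "comm FG c a \<in> HH"
  proof -
    have "comm FG (comm FG (gen i) (gen (i+1))) (gen i) \<in> UT_gens n"
      unfolding UT_gens_def using i by blast
    then show ?thesis using gens_H by (simp only: c_def a_def b_def) blast
  qed
  have X2H: "X2 \<in> HH" unfolding X2_def by (rule H_conj[OF ca G.inv_closed[OF ab(2)]])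
  have "X1 = comm FG c (a \<otimes>\<^bsub>FG\<^esub> inv\<^bsub>FG\<^esub> b) \<otimes>\<^bsub>FG\<^esub> inv\<^bsub>FG\<^esub> X2"
    unfolding e using X by (simp add: G.m_assoc)
  then have X1H: "X1 \<in> HH"
    using subgroup.m_closed[OF H_sub T subgroup.m_inv_closed[OF H_sub X2H]] by simp
  have "inv\<^bsub>FG\<^esub> b \<otimes>\<^bsub>FG\<^esub> X1 \<otimes>\<^bsub>FG\<^esub> b = inv\<^bsub>FG\<^esub> (comm FG c b)"
    unfolding X1_def using ab by (simp add: G.m_assoc)
  then have "inv\<^bsub>FG\<^esub> (comm FG c b) \<in> HH"
    using H_conj[OF X1H ab(2)] by simp
  then have "comm FG c b \<in> HH"
    using subgroup.m_inv_closed[OF H_sub] ab by fastforce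
  then show ?thesis by (simp only: c_def a_def b_def)
qed


abbreviation QQ where "QQ \<equiv> FG Mod HH"
definition q where "q x = HH #>\<^bsub>FG\<^esub> x"

lemma Q_group: "group QQ"
  using H_normal normal.factorgroup_is_group by blast

lemma q_hom: "q \<in> hom FG QQ"
  unfolding q_def[abs_def] using H_normal normal.r_coset_hom_Mod by blast

lemma q_mult: "x \<in> carrier FG \<Longrightarrow> y \<in> carrier FG \<Longrightarrow> q (x \<otimes>\<^bsub>FG\<^esub> y) = q x \<otimes>\<^bsub>QQ\<^esub> q y"
  using q_hom by (simp add: hom_mult)

lemma q_carrier: "x \<in> carrier FG \<Longrightarrow> q x \<in> carrier QQ"
  using q_hom by (simp add: hom_in_carrier)

lemma q_H: "h \<in> HH \<Longrightarrow> q h = \<one>\<^bsub>QQ\<^esub>"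
  unfolding q_def one_FactGroup using subgroup.rcos_const[OF H_sub G.is_group] by blast

lemma q_one: "q \<one>\<^bsub>FG\<^esub> = \<one>\<^bsub>QQ\<^esub>"
  by (rule q_H) (rule generate.one)

lemma q_eq: assumes "x \<in> carrier FG" "y \<in> carrier FG" "q x = q y"
  shows "x \<otimes>\<^bsub>FG\<^esub> inv\<^bsub>FG\<^esub> y \<in> HH"
proof -
  have "x \<in> HH #>\<^bsub>FG\<^esub> x" by (rule G.rcos_self[OF assms(1) H_sub])
  then have "x \<in> HH #>\<^bsub>FG\<^esub> y" using assms(3) by (simp add: q_def)
  then show ?thesis using subgroup.rcos_module_imp[OF H_sub G.is_group assms(2)] by blast
qed

lemma q_central: assumes a: "a \<in> RR" and g: "g \<in> carrier FG"
  shows "q g \<otimes>\<^bsub>QQ\<^esub> q a = q a \<otimes>\<^bsub>QQ\<^esub> q g"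
proof -
  have ac: "a \<in> carrier FG" using a R_carrier by blast
  have cN: "comm FG a g \<in> HH" using comm_N[OF a g] N_H by blast
  have cc: "comm FG a g \<in> carrier FG" using ac g by simp
  have "a \<otimes>\<^bsub>FG\<^esub> g = g \<otimes>\<^bsub>FG\<^esub> (inv\<^bsub>FG\<^esub> g \<otimes>\<^bsub>FG\<^esub> a \<otimes>\<^bsub>FG\<^esub> g)"
    using ac g by (simp add: G.m_assoc)
  also have "\<dots> = g \<otimes>\<^bsub>FG\<^esub> (a \<otimes>\<^bsub>FG\<^esub> comm FG a g)"
    using G.comm_conj[OF ac g] by simp
  finally have e: "a \<otimes>\<^bsub>FG\<^esub> g = g \<otimes>\<^bsub>FG\<^esub> (a \<otimes>\<^bsub>FG\<^esub> comm FG a g)" .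
  have "q a \<otimes>\<^bsub>QQ\<^esub> q g = q (a \<otimes>\<^bsub>FG\<^esub> g)" using q_mult ac g by simp
  also have "\<dots> = q g \<otimes>\<^bsub>QQ\<^esub> (q a \<otimes>\<^bsub>QQ\<^esub> q (comm FG a g))"
    unfolding e using q_mult ac g cc by simp
  also have "\<dots> = q g \<otimes>\<^bsub>QQ\<^esub> q a"
    using q_H[OF cN] monoid.r_one[OF group.is_monoid[OF Q_group] q_carrier[OF ac]] by simp
  finally show ?thesis by simp
qed

definition pw where "pw i = gen i [^]\<^bsub>FG\<^esub> m"

definition P :: "(nat \<Rightarrow> int) \<Rightarrow> nat list \<Rightarrow> word" where
  "P k L = foldr (\<lambda>i acc. pw i [^]\<^bsub>FG\<^esub> k i \<otimes>\<^bsub>FG\<^esub> acc) L \<one>\<^bsub>FG\<^esub>"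

lemma P_Nil[simp]: "P k [] = \<one>\<^bsub>FG\<^esub>" by (simp add: P_def)
lemma P_Cons: "P k (i # L) = pw i [^]\<^bsub>FG\<^esub> k i \<otimes>\<^bsub>FG\<^esub> P k L" by (simp add: P_def)

lemma pw_c: "1 \<le> i \<Longrightarrow> i \<le> n - 1 \<Longrightarrow> pw i \<in> carrier FG"
  unfolding pw_def by (intro G.nat_pow_closed gen_c)

lemma pw_R: assumes "1 \<le> i" "i \<le> n - 1" shows "pw i \<in> RR"
proof -
  have "pw i \<in> UT_relators n m" unfolding UT_relators_def pw_def using assms by blast
  then show ?thesis using rel_R by blast
qed

definition okL :: "nat list \<Rightarrow> bool" where "okL L \<longleftrightarrow> (\<forall>i\<in>set L. 1 \<le> i \<and> i \<le> n - 1)"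

lemma okL_Cons: "okL (i # L) \<longleftrightarrow> 1 \<le> i \<and> i \<le> n - 1 \<and> okL L"
  by (auto simp: okL_def)

lemma P_carrier: "okL L \<Longrightarrow> P k L \<in> carrier FG"
  by (induction L) (auto simp: P_Cons okL_Cons intro!: G.m_closed G.int_pow_closed pw_c)

lemma P_mult: "okL L \<Longrightarrow> q (P k L) \<otimes>\<^bsub>QQ\<^esub> q (P k' L) = q (P (\<lambda>i. k i + k' i) L)"
proof (induction L)
  case Nil then show ?case using q_one monoid.l_one[OF group.is_monoid[OF Q_group]] monoid.one_closed[OF group.is_monoid[OF Q_group]] by simp
next
  case (Cons i L)
  then have i: "1 \<le> i" "i \<le> n - 1" and L: "okL L" by (auto simp: okL_Cons)
  define a where "a = pw i [^]\<^bsub>FG\<^esub> k i"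
  define b where "b = pw i [^]\<^bsub>FG\<^esub> k' i"
  have pc: "pw i \<in> carrier FG" using pw_c[OF i] .
  have abc: "a \<in> carrier FG" "b \<in> carrier FG" unfolding a_def b_def using pc by simp_all
  have bR: "b \<in> RR" unfolding b_def by (rule G.subgroup_int_pow_closed[OF R_sub pw_R[OF i]])
  have Pc: "P k L \<in> carrier FG" "P k' L \<in> carrier FG" using P_carrier[OF L] by auto
  have ab: "a \<otimes>\<^bsub>FG\<^esub> b = pw i [^]\<^bsub>FG\<^esub> (k i + k' i)"
    unfolding a_def b_def using pc by (simp add: G.int_pow_mult)
  interpret Q: group QQ by (rule Q_group)
  have qc: "q a \<in> carrier QQ" "q b \<in> carrier QQ" "q (P k L) \<in> carrier QQ" "q (P k' L) \<in> carrier QQ"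
    using abc Pc q_carrier by auto
  have "q (P k (i # L)) \<otimes>\<^bsub>QQ\<^esub> q (P k' (i # L))
      = q a \<otimes>\<^bsub>QQ\<^esub> (q (P k L) \<otimes>\<^bsub>QQ\<^esub> q b) \<otimes>\<^bsub>QQ\<^esub> q (P k' L)"
    unfolding P_Cons a_def[symmetric] b_def[symmetric] using abc Pc qc
    by (simp add: q_mult Q.m_assoc)
  also have "\<dots> = q a \<otimes>\<^bsub>QQ\<^esub> (q b \<otimes>\<^bsub>QQ\<^esub> q (P k L)) \<otimes>\<^bsub>QQ\<^esub> q (P k' L)"
    using q_central[OF bR Pc(1)] by simp
  also have "\<dots> = q (a \<otimes>\<^bsub>FG\<^esub> b) \<otimes>\<^bsub>QQ\<^esub> (q (P k L) \<otimes>\<^bsub>QQ\<^esub> q (P k' L))"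
    using abc Pc qc by (simp add: q_mult Q.m_assoc)
  also have "\<dots> = q (P (\<lambda>i. k i + k' i) (i # L))"
    unfolding ab Cons.IH[OF L] P_Cons using pc Pc P_carrier[OF L] by (simp add: q_mult)
  finally show ?case .
qed

lemma P_zero: "\<forall>i\<in>set L. k i = 0 \<Longrightarrow> P k L = \<one>\<^bsub>FG\<^esub>"
  by (induction L) (auto simp: P_Cons)


lemma P_delta: "okL L \<Longrightarrow> distinct L \<Longrightarrow> i \<in> set L \<Longrightarrow> P (\<lambda>j. if j = i then 1 else 0) L = pw i"
proof (induction L)
  case Nil then show ?case by simp
next
  case (Cons j L)
  then have j: "1 \<le> j" "j \<le> n - 1" and L: "okL L" by (auto simp: okL_Cons)
  show ?case
  proof (cases "j = i")
    case True
    then have "i \<notin> set L" using Cons.prems by auto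
    then have "P (\<lambda>j. if j = i then 1 else 0) L = \<one>\<^bsub>FG\<^esub>" by (intro P_zero) auto
    then show ?thesis using True pw_c[OF j] by (simp add: P_Cons)
  next
    case False
    then have "P (\<lambda>j. if j = i then 1 else 0) L = pw i" using Cons by (auto simp: okL_Cons)
    moreover have "i \<in> set L" using False Cons.prems by simp
    then have "pw i \<in> carrier FG" using L pw_c unfolding okL_def by blast
    ultimately show ?thesis using False pw_c[OF j] by (simp add: P_Cons)
  qed
qed

lemma ex_pw: "1 \<le> i \<Longrightarrow> i \<le> n - 1 \<Longrightarrow> ex j (pw i) = (if i = j then int m else 0)"
  unfolding pw_def using ex_nat_pow[OF gen_c, of i j m] ex_gen[of j i] by simp

lemma ex_P: "okL L \<Longrightarrow> distinct L \<Longrightarrow> ex j (P k L) = (if j \<in> set L then k j * int m else 0)"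
proof (induction L)
  case Nil then show ?case by (simp add: free_group_one)
next
  case (Cons i L)
  then have i: "1 \<le> i" "i \<le> n - 1" and L: "okL L" by (auto simp: okL_Cons)
  have "ex j (P k (i # L)) = k i * ex j (pw i) + ex j (P k L)"
    by (simp add: P_Cons ex_mult ex_int_pow[OF pw_c[OF i]])
  then show ?case using Cons ex_pw[OF i, of j] by (auto simp: okL_Cons)
qed

abbreviation L0 where "L0 \<equiv> [1..<n]"

lemma okL0: "okL L0" by (auto simp: okL_def)

definition SS where "SS = {x \<in> carrier FG. \<exists>k. q x = q (P k L0)}"

lemma SS_sub: "subgroup SS FG"
proof (rule G.subgroupI)
  show "SS \<subseteq> carrier FG" by (auto simp: SS_def)
next
  have "P (\<lambda>_. 0) L0 = \<one>\<^bsub>FG\<^esub>" using P_zero[of L0 "\<lambda>_. 0"] by simp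
  then have e: "q \<one>\<^bsub>FG\<^esub> = q (P (\<lambda>_. 0) L0)" by simp
  have "\<one>\<^bsub>FG\<^esub> \<in> SS" unfolding SS_def
    by (rule CollectI, rule conjI, rule G.one_closed, rule exI, rule e)
  then show "SS \<noteq> {}" by blast
next
  interpret Q: group QQ by (rule Q_group)
  fix x assume "x \<in> SS"
  then obtain k where x: "x \<in> carrier FG" "q x = q (P k L0)" by (auto simp: SS_def)
  have Pc: "\<And>k. P k L0 \<in> carrier FG" using P_carrier[OF okL0] .
  have "q (P (\<lambda>i. - k i) L0) \<otimes>\<^bsub>QQ\<^esub> q (P k L0) = q (P (\<lambda>_. 0) L0)"
    using P_mult[OF okL0, of "\<lambda>i. - k i" k] by simp
  also have "\<dots> = \<one>\<^bsub>QQ\<^esub>" using P_zero[of L0 "\<lambda>_. 0"] q_one by simp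
  finally have "inv\<^bsub>QQ\<^esub> (q (P k L0)) = q (P (\<lambda>i. - k i) L0)"
    using Q.inv_equality q_carrier Pc by blast
  moreover have "q (inv\<^bsub>FG\<^esub> x) = inv\<^bsub>QQ\<^esub> (q x)"
    using group_hom.hom_inv[of FG QQ q x] q_hom Q_group x
    by (simp add: group_hom_def group_hom_axioms_def G.is_group)
  ultimately show "inv\<^bsub>FG\<^esub> x \<in> SS" unfolding SS_def using x by auto
next
  fix x y assume "x \<in> SS" "y \<in> SS"
  then obtain k k' where x: "x \<in> carrier FG" "q x = q (P k L0)"
    and y: "y \<in> carrier FG" "q y = q (P k' L0)" by (auto simp: SS_def)
  have "q (x \<otimes>\<^bsub>FG\<^esub> y) = q (P (\<lambda>i. k i + k' i) L0)"
    using q_mult[OF x(1) y(1)] x(2) y(2) P_mult[OF okL0] by simp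
  then show "x \<otimes>\<^bsub>FG\<^esub> y \<in> SS" unfolding SS_def using x y by auto
qed

lemma rel_cases:
  assumes "r \<in> UT_relators n m"
  shows "r \<in> HH \<or> (\<exists>i. 1 \<le> i \<and> i \<le> n - 1 \<and> r = pw i)"
proof -
  from assms consider
      i where "r = gen i [^]\<^bsub>FG\<^esub> m" "1 \<le> i" "i \<le> n - 1"
    | "r \<in> UT_gens n"
    | i where "r = comm FG (comm FG (gen i) (gen (i+1))) (gen (i+1))" "1 \<le> i" "i \<le> n - 2"
    unfolding UT_relators_def UT_gens_def by blast
  then show ?thesis
  proof cases
    case 1 then show ?thesis unfolding pw_def by blast
  next
    case 2 then show ?thesis using gens_H by blast
  next
    case 3 then show ?thesis using rel4_H by blast
  qed
qed

lemma R_SS: "RR \<subseteq> SS"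
  unfolding normal_closure_def
proof (rule G.generate_subgroup_incl[OF _ SS_sub])
  show "(\<Union>g\<in>carrier FG. (\<lambda>y. inv\<^bsub>FG\<^esub> g \<otimes>\<^bsub>FG\<^esub> y \<otimes>\<^bsub>FG\<^esub> g) ` UT_relators n m) \<subseteq> SS"
  proof
    fix x assume "x \<in> (\<Union>g\<in>carrier FG. (\<lambda>y. inv\<^bsub>FG\<^esub> g \<otimes>\<^bsub>FG\<^esub> y \<otimes>\<^bsub>FG\<^esub> g) ` UT_relators n m)"
    then obtain g r where g: "g \<in> carrier FG" and r: "r \<in> UT_relators n m"
      and x: "x = inv\<^bsub>FG\<^esub> g \<otimes>\<^bsub>FG\<^esub> r \<otimes>\<^bsub>FG\<^esub> g" by blast
    have rc: "r \<in> carrier FG" using r relators_carrier by blast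
    have rR: "r \<in> RR" using r rel_R by blast
    have xc: "x \<in> carrier FG" using x rc g by simp
    have cH: "comm FG r g \<in> HH" using comm_N[OF rR g] N_H by blast
    have "q x = q (r \<otimes>\<^bsub>FG\<^esub> comm FG r g)" unfolding x G.comm_conj[OF rc g] ..
    also have "\<dots> = q r \<otimes>\<^bsub>QQ\<^esub> \<one>\<^bsub>QQ\<^esub>" using q_mult rc g q_H[OF cH] by simp
    also have "\<dots> = q r" using monoid.r_one[OF group.is_monoid[OF Q_group] q_carrier[OF rc]] .
    finally have qx: "q x = q r" .
    from rel_cases[OF r] have "\<exists>k. q r = q (P k L0)"
    proof
      assume "r \<in> HH"
      then have "q r = q (P (\<lambda>_. 0) L0)" using q_H q_one P_zero[of L0 "\<lambda>_. 0"] by simp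
      then show ?thesis by blast
    next
      assume "\<exists>i. 1 \<le> i \<and> i \<le> n - 1 \<and> r = pw i"
      then obtain i where i: "1 \<le> i" "i \<le> n - 1" "r = pw i" by blast
      have "i \<in> set L0" using i by auto
      then have "P (\<lambda>j. if j = i then 1 else 0) L0 = pw i" using P_delta[OF okL0] by simp
      then show ?thesis using i by metis
    qed
    then show "x \<in> SS" unfolding SS_def using xc qx by simp
  qed
qed

lemma RC_H: "RR \<inter> CC \<subseteq> HH"
proof
  fix x assume x: "x \<in> RR \<inter> CC"
  then have "x \<in> SS" using R_SS by blast
  then obtain k where xc: "x \<in> carrier FG" and qx: "q x = q (P k L0)" by (auto simp: SS_def)
  have Pc: "P k L0 \<in> carrier FG" using P_carrier[OF okL0] .
  have y: "x \<otimes>\<^bsub>FG\<^esub> inv\<^bsub>FG\<^esub> P k L0 \<in> HH" by (rule q_eq[OF xc Pc qx])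
  have "k j = 0" if j: "j \<in> set L0" for j
  proof -
    have "ex j (x \<otimes>\<^bsub>FG\<^esub> inv\<^bsub>FG\<^esub> P k L0) = 0"
      using y H_RC ex_comm_subgroup by blast
    moreover have "ex j x = 0" using x ex_comm_subgroup by blast
    ultimately have "ex j (P k L0) = 0" using ex_inv[OF Pc] by (simp add: ex_mult)
    then have "k j * int m = 0" using ex_P[OF okL0, of j k] j by simp
    then show "k j = 0" using m2 by simp
  qed
  then have "P k L0 = \<one>\<^bsub>FG\<^esub>" by (intro P_zero) blast
  then show "x \<in> HH" using y xc by simp
qed

end

theorem mainTheorem2:
  fixes n m :: nat
  assumes "n \<ge> 3" and "m \<ge> 2"
  defines "F \<equiv> free_group {1..n-1}"
  defines "R \<equiv> normal_closure F (UT_relators n m)"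
  shows "UT_gens n \<subseteq> R \<inter> comm_subgroup F (carrier F) (carrier F)
       \<and> generate F (UT_gens n \<union> comm_subgroup F R (carrier F))
           = R \<inter> comm_subgroup F (carrier F) (carrier F)"
proof -
  interpret ut n m using assms(1,2) by unfold_locales
  show ?thesis unfolding F_def R_def
    using gens_R gens_C H_RC RC_H by blast
qed

end
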